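(* Let $G=(X,b,m,c)$ be a weighted graph with $c\ge0$ and let $p\in[1,\infty)$. (a) For every $\varepsilon>0$ there is a strictly positive function $f_\varepsilon\colon X\to(0,\infty)$ such that every $g\colon X\to\mathbb{R}$ with $g(x)\in(-f_\varepsilon(x),f_\varepsilon(x))$ for all $x\in X$ satisfies $\mathcal{E}_p(g)<\varepsilon$. (b) For every $\varepsilon>0$ and every $u\in D^p$ there is $u_\varepsilon\in D^p$ such that $u_\varepsilon(x)\ne u_\varepsilon(y)$ for all $x\ne y$, $\sup_X|u-u_\varepsilon|<\varepsilon$, and $\mathcal{E}_p(u-u_\varepsilon)<\varepsilon$.
   Context: Weighted graph $G=(X,b,m,c)$: $X$ countably infinite; $b$ symmetric, nonnegative, zero on the diagonal, $\sum_yb(x,y)<\infty$; $m>0$; $c\colon X\to[0,\infty)$; $x\sim y$ iff $b(x,y)>0$; $X$ connected. $\mathcal{E}_p(f)=\frac12\sum_{x,y}b(x,y)|f(x)-f(y)|^p+\sum_xc(x)|f(x)|^p$ and $D^p=\{f:\mathcal{E}_p(f)<\infty\}$. *)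

theory Defs
  imports "HOL-Analysis.Analysis"
begin

definition weighted_graph :: "('a \<Rightarrow> 'a \<Rightarrow> real) \<Rightarrow> ('a \<Rightarrow> real) \<Rightarrow> ('a \<Rightarrow> real) \<Rightarrow> bool" where
  "weighted_graph b m c \<longleftrightarrow>
     countable (UNIV :: 'a set) \<and> infinite (UNIV :: 'a set) \<and>
     (\<forall>x y. b x y = b y x) \<and> (\<forall>x y. 0 \<le> b x y) \<and> (\<forall>x. b x x = 0) \<and>
     (\<forall>x. (\<lambda>y. b x y) summable_on UNIV) \<and>
     (\<forall>x. 0 < m x) \<and> (\<forall>x. 0 \<le> c x) \<and>
     (\<forall>x y. (x, y) \<in> {(u, v). 0 < b u v}\<^sup>*)"

definition energy :: "real \<Rightarrow> ('a \<Rightarrow> 'a \<Rightarrow> real) \<Rightarrow> ('a \<Rightarrow> real) \<Rightarrow> ('a \<Rightarrow> real) \<Rightarrow> ennreal" where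
  "energy p b c f =
     ennreal (1/2) * (\<Sum>\<^sub>\<infinity>(x, y)\<in>UNIV. ennreal (b x y * \<bar>f x - f y\<bar> powr p))
     + (\<Sum>\<^sub>\<infinity>x\<in>UNIV. ennreal (c x * \<bar>f x\<bar> powr p))"

definition Dp :: "real \<Rightarrow> ('a \<Rightarrow> 'a \<Rightarrow> real) \<Rightarrow> ('a \<Rightarrow> real) \<Rightarrow> ('a \<Rightarrow> real) set" where
  "Dp p b c = {f. energy p b c f < \<infinity>}"

end

theory Submission
  imports Defs
begin

lemma infsum_ennreal_bound:
  fixes F :: "'b \<Rightarrow> real" and G :: "'b \<Rightarrow> ennreal"
  assumes G: "\<And>x. G x = ennreal (F x)"
    and nn: "\<And>x. 0 \<le> F x" and bd: "\<And>S. finite S \<Longrightarrow> sum F S \<le> B"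
  shows "infsum G UNIV \<le> ennreal B"
proof -
  have "infsum G UNIV = Sup (sum G ` {S. finite S \<and> S \<subseteq> UNIV})"
    by (rule nonneg_infsum_complete) simp
  also have "\<dots> \<le> ennreal B"
  proof (rule Sup_least)
    fix z assume "z \<in> sum G ` {S. finite S \<and> S \<subseteq> UNIV}"
    then obtain S where S: "finite S" "z = sum G S" by auto
    have "sum G S = ennreal (sum F S)" using nn by (simp add: G sum_ennreal)
    also have "\<dots> \<le> ennreal B" using bd[OF S(1)] by (rule ennreal_leI)
    finally show "z \<le> ennreal B" using S by simp
  qed
  finally show ?thesis .
qed

lemma infsum_ennreal_finite_bound:
  fixes F :: "'b \<Rightarrow> real" and G :: "'b \<Rightarrow> ennreal"
  assumes G: "\<And>x. G x = ennreal (F x)"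
    and nn: "\<And>x. 0 \<le> F x" and fin: "infsum G UNIV < \<infinity>"
  shows "\<exists>B. \<forall>S. finite S \<longrightarrow> sum F S \<le> B"
proof (intro exI allI impI)
  fix S :: "'b set" assume S: "finite S"
  have "infsum G UNIV = Sup (sum G ` {S. finite S \<and> S \<subseteq> UNIV})"
    by (rule nonneg_infsum_complete) simp
  hence "sum G S \<le> infsum G UNIV" using S by (auto intro: Sup_upper)
  moreover have "sum G S = ennreal (sum F S)" using nn by (simp add: G sum_ennreal)
  ultimately have "ennreal (sum F S) \<le> infsum G UNIV" by simp
  hence "enn2real (ennreal (sum F S)) \<le> enn2real (infsum G UNIV)"
    using fin by (intro enn2real_mono) auto
  moreover have "0 \<le> sum F S" using nn by (simp add: sum_nonneg)
  ultimately show "sum F S \<le> enn2real (infsum G UNIV)" by simp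
qed

lemma powr_diff_bound:
  fixes s t p :: real
  assumes "0 \<le> p"
  shows "\<bar>s - t\<bar> powr p \<le> 2 powr p * (\<bar>s\<bar> powr p + \<bar>t\<bar> powr p)"
proof -
  define M where "M = max \<bar>s\<bar> \<bar>t\<bar>"
  have "\<bar>s - t\<bar> \<le> 2 * M" unfolding M_def by linarith
  hence "\<bar>s - t\<bar> powr p \<le> (2 * M) powr p" using assms by (intro powr_mono2) auto
  also have "\<dots> = 2 powr p * M powr p" unfolding M_def by (simp add: powr_mult)
  also have "M powr p \<le> \<bar>s\<bar> powr p + \<bar>t\<bar> powr p"
    unfolding M_def by (cases "\<bar>s\<bar> \<le> \<bar>t\<bar>") (auto simp: max_def)
  hence "2 powr p * M powr p \<le> 2 powr p * (\<bar>s\<bar> powr p + \<bar>t\<bar> powr p)"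
    by (intro mult_left_mono) auto
  finally show ?thesis .
qed

lemma ennreal_half_sum_fin:
  fixes X Y :: ennreal
  assumes "ennreal (1/2) * X + Y < \<infinity>"
  shows "X < \<infinity>" and "Y < \<infinity>"
proof -
  have h: "ennreal (1/2) * X \<noteq> top" "Y \<noteq> top"
    using assms by (auto simp: ennreal_add_eq_top less_top)
  from h(1) have "X \<noteq> top" by (auto simp: ennreal_mult_eq_top_iff)
  thus "X < \<infinity>" by (simp add: less_top)
  from h(2) show "Y < \<infinity>" by (simp add: less_top)
qed

lemma energy_parts_finite:
  assumes "energy p b c u < \<infinity>"
  shows "(\<Sum>\<^sub>\<infinity>(x, y)\<in>UNIV. ennreal (b x y * \<bar>u x - u y\<bar> powr p)) < \<infinity>"
    and "(\<Sum>\<^sub>\<infinity>x\<in>UNIV. ennreal (c x * \<bar>u x\<bar> powr p)) < \<infinity>"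
  using ennreal_half_sum_fin[OF assms[unfolded energy_def]] by auto

lemma energy_diff_finite:
  fixes b :: "'a \<Rightarrow> 'a \<Rightarrow> real" and c u g :: "'a \<Rightarrow> real"
  assumes p: "0 \<le> p" and bnn: "\<And>x y. 0 \<le> b x y" and cnn: "\<And>x. 0 \<le> c x"
    and u: "energy p b c u < \<infinity>" and g: "energy p b c g < \<infinity>"
  shows "energy p b c (\<lambda>x. u x - g x) < \<infinity>"
proof -
  define Pu where "Pu z = b (fst z) (snd z) * \<bar>u (fst z) - u (snd z)\<bar> powr p" for z
  define Pg where "Pg z = b (fst z) (snd z) * \<bar>g (fst z) - g (snd z)\<bar> powr p" for z
  define Pug where "Pug z = b (fst z) (snd z) * \<bar>u (fst z) - g (fst z) - (u (snd z) - g (snd z))\<bar> powr p" for z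
  define Cu where "Cu x = c x * \<bar>u x\<bar> powr p" for x
  define Cg where "Cg x = c x * \<bar>g x\<bar> powr p" for x
  define Cug where "Cug x = c x * \<bar>u x - g x\<bar> powr p" for x
  have nnPu: "\<And>z. 0 \<le> Pu z" unfolding Pu_def using bnn by simp
  have nnPg: "\<And>z. 0 \<le> Pg z" unfolding Pg_def using bnn by simp
  have nnPug: "\<And>z. 0 \<le> Pug z" unfolding Pug_def using bnn by simp
  have nnCu: "\<And>z. 0 \<le> Cu z" unfolding Cu_def using cnn by simp
  have nnCg: "\<And>z. 0 \<le> Cg z" unfolding Cg_def using cnn by simp
  have nnCug: "\<And>z. 0 \<le> Cug z" unfolding Cug_def using cnn by simp
  have "\<exists>B. \<forall>S. finite S \<longrightarrow> sum Pu S \<le> B"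
    by (rule infsum_ennreal_finite_bound[OF _ nnPu energy_parts_finite(1)[OF u]]) (auto simp: Pu_def split: prod.splits)
  then obtain B1 where B1: "\<And>S. finite S \<Longrightarrow> sum Pu S \<le> B1" by blast
  have "\<exists>B. \<forall>S. finite S \<longrightarrow> sum Pg S \<le> B"
    by (rule infsum_ennreal_finite_bound[OF _ nnPg energy_parts_finite(1)[OF g]]) (auto simp: Pg_def split: prod.splits)
  then obtain B2 where B2: "\<And>S. finite S \<Longrightarrow> sum Pg S \<le> B2" by blast
  have "\<exists>B. \<forall>S. finite S \<longrightarrow> sum Cu S \<le> B"
    by (rule infsum_ennreal_finite_bound[OF _ nnCu energy_parts_finite(2)[OF u]]) (auto simp: Cu_def)
  then obtain B3 where B3: "\<And>S. finite S \<Longrightarrow> sum Cu S \<le> B3" by blast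
  have "\<exists>B. \<forall>S. finite S \<longrightarrow> sum Cg S \<le> B"
    by (rule infsum_ennreal_finite_bound[OF _ nnCg energy_parts_finite(2)[OF g]]) (auto simp: Cg_def)
  then obtain B4 where B4: "\<And>S. finite S \<Longrightarrow> sum Cg S \<le> B4" by blast
  have pw1: "Pug z \<le> 2 powr p * (Pu z + Pg z)" for z
  proof -
    have "\<bar>u (fst z) - g (fst z) - (u (snd z) - g (snd z))\<bar> powr p \<le>
          2 powr p * (\<bar>u (fst z) - u (snd z)\<bar> powr p + \<bar>g (fst z) - g (snd z)\<bar> powr p)"
      using powr_diff_bound[OF p, of "u (fst z) - u (snd z)" "g (fst z) - g (snd z)"]
      by (simp add: algebra_simps)
    hence "b (fst z) (snd z) * \<bar>u (fst z) - g (fst z) - (u (snd z) - g (snd z))\<bar> powr p \<le>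
          b (fst z) (snd z) * (2 powr p * (\<bar>u (fst z) - u (snd z)\<bar> powr p + \<bar>g (fst z) - g (snd z)\<bar> powr p))"
      using bnn by (intro mult_left_mono) auto
    thus ?thesis unfolding Pug_def Pu_def Pg_def by (simp add: algebra_simps)
  qed
  have pw2: "Cug x \<le> 2 powr p * (Cu x + Cg x)" for x
  proof -
    have "\<bar>u x - g x\<bar> powr p \<le> 2 powr p * (\<bar>u x\<bar> powr p + \<bar>g x\<bar> powr p)"
      using powr_diff_bound[OF p] by simp
    hence "c x * \<bar>u x - g x\<bar> powr p \<le> c x * (2 powr p * (\<bar>u x\<bar> powr p + \<bar>g x\<bar> powr p))"
      using cnn by (intro mult_left_mono) auto
    thus ?thesis unfolding Cug_def Cu_def Cg_def by (simp add: algebra_simps)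
  qed
  have I1: "(\<Sum>\<^sub>\<infinity>(x, y)\<in>UNIV. ennreal (b x y * \<bar>u x - g x - (u y - g y)\<bar> powr p))
      \<le> ennreal (2 powr p * (B1 + B2))"
  proof (rule infsum_ennreal_bound[where F = Pug])
    show "\<And>z. (case z of (x, y) \<Rightarrow> ennreal (b x y * \<bar>u x - g x - (u y - g y)\<bar> powr p)) = ennreal (Pug z)"
      by (auto simp: Pug_def split: prod.splits)
    show "\<And>z. 0 \<le> Pug z" by (rule nnPug)
    fix S :: "('a \<times> 'a) set" assume S: "finite S"
    have "sum Pug S \<le> sum (\<lambda>z. 2 powr p * (Pu z + Pg z)) S" by (intro sum_mono pw1)
    also have "\<dots> = 2 powr p * (sum Pu S + sum Pg S)" by (simp add: sum.distrib distrib_left sum_distrib_left)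
    also have "\<dots> \<le> 2 powr p * (B1 + B2)" using B1[OF S] B2[OF S] by (intro mult_left_mono) auto
    finally show "sum Pug S \<le> 2 powr p * (B1 + B2)" .
  qed
  have I2: "(\<Sum>\<^sub>\<infinity>x\<in>UNIV. ennreal (c x * \<bar>u x - g x\<bar> powr p)) \<le> ennreal (2 powr p * (B3 + B4))"
  proof (rule infsum_ennreal_bound[where F = Cug])
    show "\<And>x. ennreal (c x * \<bar>u x - g x\<bar> powr p) = ennreal (Cug x)" by (simp add: Cug_def)
    show "\<And>z. 0 \<le> Cug z" by (rule nnCug)
    fix S :: "'a set" assume S: "finite S"
    have "sum Cug S \<le> sum (\<lambda>z. 2 powr p * (Cu z + Cg z)) S" by (intro sum_mono pw2)
    also have "\<dots> = 2 powr p * (sum Cu S + sum Cg S)" by (simp add: sum.distrib distrib_left sum_distrib_left)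
    also have "\<dots> \<le> 2 powr p * (B3 + B4)" using B3[OF S] B4[OF S] by (intro mult_left_mono) auto
    finally show "sum Cug S \<le> 2 powr p * (B3 + B4)" .
  qed
  have "energy p b c (\<lambda>x. u x - g x) \<le> ennreal (1/2) * ennreal (2 powr p * (B1 + B2)) + ennreal (2 powr p * (B3 + B4))"
    unfolding energy_def using I1 I2 by (intro add_mono mult_left_mono) auto
  also have "\<dots> < \<infinity>" by (simp add: ennreal_mult_eq_top_iff less_top[symmetric])
  finally show ?thesis .
qed

lemma geom_sum_le:
  fixes idx :: "'a \<Rightarrow> nat"
  assumes inj: "inj idx" and A: "finite A"
  shows "(\<Sum>x\<in>A. (1/2::real) ^ idx x) \<le> 2"
proof -
  have "(\<Sum>x\<in>A. (1/2::real) ^ idx x) = (\<Sum>n\<in>idx ` A. (1/2::real) ^ n)"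
    using inj by (simp add: sum.reindex inj_on_subset[OF inj])
  also have "\<dots> \<le> (\<Sum>n. (1/2::real) ^ n)"
    by (rule sum_le_suminf) (use A in auto)
  also have "\<dots> = 2" using suminf_geometric[of "1/2::real"] by simp
  finally show ?thesis .
qed

lemma part_a:
  fixes b :: "'a \<Rightarrow> 'a \<Rightarrow> real" and m c :: "'a \<Rightarrow> real"
  assumes wg: "weighted_graph b m c" and p: "1 \<le> p" and e: "0 < \<epsilon>"
  shows "\<exists>f. (\<forall>x. 0 < f x) \<and> (\<forall>g. (\<forall>x. \<bar>g x\<bar> < f x) \<longrightarrow> energy p b c g \<le> ennreal (\<epsilon>/2))"
proof -
  have cnt: "countable (UNIV :: 'a set)" and sym: "\<And>x y. b x y = b y x"
    and bnn: "\<And>x y. 0 \<le> b x y" and summ: "\<And>x. (\<lambda>y. b x y) summable_on UNIV"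
    and cnn: "\<And>x. 0 \<le> c x"
    using wg unfolding weighted_graph_def by auto
  define idx where "idx = to_nat_on (UNIV :: 'a set)"
  have inj: "inj idx" unfolding idx_def using inj_on_to_nat_on[OF cnt] .
  define D where "D x = (\<Sum>\<^sub>\<infinity>y. b x y)" for x
  define K where "K x = \<epsilon>/8 * (1/2::real) ^ idx x" for x
  define f where "f x = min (1/2) (K x / (D x + c x + 1))" for x
  have Dnn: "0 \<le> D x" for x unfolding D_def using bnn by (intro infsum_nonneg) auto
  have Kpos: "0 < K x" for x unfolding K_def using e by simp
  have fpos: "0 < f x" for x unfolding f_def using Kpos[of x] Dnn[of x] cnn[of x] by auto
  have fhalf: "f x \<le> 1/2" for x unfolding f_def by (rule min.cobounded1)
  have fK: "f x * (D x + c x) \<le> K x" for x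
  proof -
    have pos: "0 < D x + c x + 1" using Dnn[of x] cnn[of x] by simp
    have "f x \<le> K x / (D x + c x + 1)" unfolding f_def by simp
    hence "f x * (D x + c x) \<le> K x / (D x + c x + 1) * (D x + c x)"
      using Dnn[of x] cnn[of x] by (intro mult_right_mono) auto
    also have "\<dots> \<le> K x" using pos Kpos[of x] Dnn[of x] cnn[of x]
      by (simp add: divide_le_eq field_simps)
    finally show ?thesis .
  qed
  have fD: "f x * D x \<le> K x" for x using fK[of x] fpos[of x] cnn[of x]
    by (smt (verit) mult_nonneg_nonneg distrib_left)
  have fc: "c x * f x \<le> K x" for x using fK[of x] fpos[of x] Dnn[of x]
    by (smt (verit) mult_nonneg_nonneg distrib_left mult.commute)
  have Ksum: "sum K A \<le> \<epsilon>/4" if "finite A" for A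
  proof -
    have "sum K A = \<epsilon>/8 * (\<Sum>x\<in>A. (1/2::real) ^ idx x)" unfolding K_def by (simp add: sum_distrib_left)
    also have "\<dots> \<le> \<epsilon>/8 * 2" using geom_sum_le[OF inj that] e by (intro mult_left_mono) auto
    finally show ?thesis by simp
  qed
  have bsum: "(\<Sum>y\<in>A. b x y) \<le> D x" if "finite A" for A x
  proof -
    have "(\<Sum>y\<in>A. b x y) = (\<Sum>\<^sub>\<infinity>y\<in>A. b x y)" using that by simp
    also have "\<dots> \<le> D x" unfolding D_def
      by (rule infsum_mono2) (use that summ bnn in \<open>auto intro: summable_on_finite\<close>)
    finally show ?thesis .
  qed
  show ?thesis
  proof (intro exI conjI allI impI)
    show "\<And>x. 0 < f x" by (rule fpos)
    fix g :: "'a \<Rightarrow> real" assume g: "\<forall>x. \<bar>g x\<bar> < f x"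
    define P where "P z = b (fst z) (snd z) * \<bar>g (fst z) - g (snd z)\<bar> powr p" for z
    define C where "C x = c x * \<bar>g x\<bar> powr p" for x
    have Pnn: "0 \<le> P z" for z unfolding P_def using bnn by simp
    have Cnn: "0 \<le> C x" for x unfolding C_def using cnn by simp
    have pw: "P (x, y) \<le> b x y * (f x + f y)" for x y
    proof -
      let ?d = "\<bar>g x - g y\<bar>"
      have d1: "?d \<le> f x + f y" using g[rule_format, of x] g[rule_format, of y] by linarith
      have d2: "?d \<le> 1" using d1 fhalf[of x] fhalf[of y] by linarith
      have "?d powr p \<le> ?d"
      proof (cases "?d = 0")
        case True thus ?thesis by simp
      next
        case False thus ?thesis using d2 p by (intro powr_le_one_le) auto
      qed
      hence "?d powr p \<le> f x + f y" using d1 by linarith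
      thus ?thesis unfolding P_def using bnn[of x y] by (simp add: mult_left_mono)
    qed
    have pwc: "C x \<le> c x * f x" for x
    proof -
      let ?d = "\<bar>g x\<bar>"
      have d1: "?d \<le> f x" using g[rule_format, of x] by linarith
      have d2: "?d \<le> 1" using d1 fhalf[of x] by linarith
      have "?d powr p \<le> ?d"
      proof (cases "?d = 0")
        case True thus ?thesis by simp
      next
        case False thus ?thesis using d2 p by (intro powr_le_one_le) auto
      qed
      hence "?d powr p \<le> f x" using d1 by linarith
      thus ?thesis unfolding C_def using cnn[of x] by (simp add: mult_left_mono)
    qed
    have Pbound: "sum P S \<le> \<epsilon>/2" if S: "finite S" for S
    proof -
      define A where "A = fst ` S \<union> snd ` S"
      have A: "finite A" unfolding A_def using S by simp
      have SA: "S \<subseteq> A \<times> A" unfolding A_def by force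
      have "sum P S \<le> sum P (A \<times> A)" using A SA Pnn by (intro sum_mono2) auto
      also have "\<dots> = (\<Sum>x\<in>A. \<Sum>y\<in>A. P (x, y))" by (simp add: sum.cartesian_product)
      also have "\<dots> \<le> (\<Sum>x\<in>A. \<Sum>y\<in>A. b x y * (f x + f y))" by (intro sum_mono pw)
      also have "\<dots> = (\<Sum>x\<in>A. \<Sum>y\<in>A. b x y * f x) + (\<Sum>x\<in>A. \<Sum>y\<in>A. b x y * f y)"
        by (simp add: distrib_left sum.distrib)
      also have "(\<Sum>x\<in>A. \<Sum>y\<in>A. b x y * f y) = (\<Sum>x\<in>A. \<Sum>y\<in>A. b x y * f x)"
      proof -
        have "(\<Sum>x\<in>A. \<Sum>y\<in>A. b x y * f y) = (\<Sum>y\<in>A. \<Sum>x\<in>A. b y x * f y)"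
          by (subst sum.swap) (simp add: sym)
        thus ?thesis by simp
      qed
      also have "(\<Sum>x\<in>A. \<Sum>y\<in>A. b x y * f x) = (\<Sum>x\<in>A. f x * (\<Sum>y\<in>A. b x y))"
        by (simp add: sum_distrib_left mult.commute)
      also have "(\<Sum>x\<in>A. f x * (\<Sum>y\<in>A. b x y)) \<le> (\<Sum>x\<in>A. K x)"
      proof (rule sum_mono)
        fix x assume "x \<in> A"
        have "f x * (\<Sum>y\<in>A. b x y) \<le> f x * D x"
          using bsum[OF A] fpos[of x] by (intro mult_left_mono) auto
        thus "f x * (\<Sum>y\<in>A. b x y) \<le> K x" using fD[of x] by linarith
      qed
      finally show ?thesis using Ksum[OF A] by linarith
    qed
    have Cbound: "sum C S \<le> \<epsilon>/4" if S: "finite S" for S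
    proof -
      have "sum C S \<le> sum K S" using pwc fc by (intro sum_mono) (meson order_trans)
      thus ?thesis using Ksum[OF S] by linarith
    qed
    have I1: "(\<Sum>\<^sub>\<infinity>(x, y)\<in>UNIV. ennreal (b x y * \<bar>g x - g y\<bar> powr p)) \<le> ennreal (\<epsilon>/2)"
    proof (rule infsum_ennreal_bound[where F = P])
      show "\<And>z. (case z of (x, y) \<Rightarrow> ennreal (b x y * \<bar>g x - g y\<bar> powr p)) = ennreal (P z)"
        by (auto simp: P_def split: prod.splits)
    qed (rule Pnn, rule Pbound)
    have I2: "(\<Sum>\<^sub>\<infinity>x\<in>UNIV. ennreal (c x * \<bar>g x\<bar> powr p)) \<le> ennreal (\<epsilon>/4)"
      by (rule infsum_ennreal_bound[where F = C]) (simp add: C_def, rule Cnn, rule Cbound)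
    have "energy p b c g \<le> ennreal (1/2) * ennreal (\<epsilon>/2) + ennreal (\<epsilon>/4)"
      unfolding energy_def using I1 I2 by (intro add_mono mult_left_mono) auto
    also have "\<dots> = ennreal (\<epsilon>/2)"
    proof -
      have "ennreal (1/2) * ennreal (\<epsilon>/2) = ennreal (\<epsilon>/4)"
        using e by (subst ennreal_mult[symmetric]) auto
      moreover have "ennreal (\<epsilon>/4) + ennreal (\<epsilon>/4) = ennreal (\<epsilon>/2)"
        using e by (subst ennreal_plus[symmetric]) auto
      ultimately show ?thesis by simp
    qed
    finally show "energy p b c g \<le> ennreal (\<epsilon>/2)" .
  qed
qed

theorem lemma3p13:
  fixes b :: "'a \<Rightarrow> 'a \<Rightarrow> real" and m c :: "'a \<Rightarrow> real" and p :: real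
  assumes "weighted_graph b m c" and "1 \<le> p"
  shows "(\<forall>\<epsilon>>0. \<exists>f :: 'a \<Rightarrow> real. (\<forall>x. 0 < f x) \<and>
            (\<forall>g :: 'a \<Rightarrow> real. (\<forall>x. - f x < g x \<and> g x < f x) \<longrightarrow> energy p b c g < ennreal \<epsilon>))
       \<and> (\<forall>\<epsilon>>0. \<forall>u \<in> Dp p b c. \<exists>u\<epsilon> \<in> Dp p b c.
            (\<forall>x y. x \<noteq> y \<longrightarrow> u\<epsilon> x \<noteq> u\<epsilon> y) \<and>
            (SUP x. ereal \<bar>u x - u\<epsilon> x\<bar>) < ereal \<epsilon> \<and>
            energy p b c (\<lambda>x. u x - u\<epsilon> x) < ennreal \<epsilon>)"
proof (intro conjI allI impI ballI)
  note wg = assms(1) and p = assms(2)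
  have cnt: "countable (UNIV :: 'a set)"
    and bnn: "\<And>x y. 0 \<le> b x y" and cnn: "\<And>x. 0 \<le> c x"
    using wg unfolding weighted_graph_def by auto
  fix \<epsilon> :: real assume e: "0 < \<epsilon>"
  have lt: "ennreal (\<epsilon>/2) < ennreal \<epsilon>" using e by (simp add: ennreal_lessI)
  obtain f where fpos: "\<And>x. 0 < f x"
    and fE: "\<And>g. (\<forall>x. \<bar>g x\<bar> < f x) \<Longrightarrow> energy p b c g \<le> ennreal (\<epsilon>/2)"
    using part_a[OF wg p e] by blast
  {
    show "\<exists>f :: 'a \<Rightarrow> real. (\<forall>x. 0 < f x) \<and>
            (\<forall>g :: 'a \<Rightarrow> real. (\<forall>x. - f x < g x \<and> g x < f x) \<longrightarrow> energy p b c g < ennreal \<epsilon>)"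
    proof (intro exI conjI allI impI)
      show "\<And>x. 0 < f x" by (rule fpos)
      fix g :: "'a \<Rightarrow> real" assume "\<forall>x. - f x < g x \<and> g x < f x"
      hence "\<forall>x. \<bar>g x\<bar> < f x" by (metis abs_less_iff minus_less_iff)
      thus "energy p b c g < ennreal \<epsilon>" using fE lt by (meson order.strict_trans1)
    qed
  next
    fix u assume u: "u \<in> Dp p b c"
    define idx where "idx = to_nat_on (UNIV :: 'a set)"
    have inj: "inj idx" unfolding idx_def using inj_on_to_nat_on[OF cnt] .
    define r where "r x = min (f x) (\<epsilon>/2)" for x
    have rpos: "0 < r x" for x unfolding r_def using fpos[of x] e by simp
    define n0 where "n0 x = (SOME n. (1/2::real) ^ n < r x)" for x
    have n0: "(1/2::real) ^ n0 x < r x" for x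
      unfolding n0_def by (rule someI_ex) (rule real_arch_pow_inv[OF rpos], simp)
    define N where "N x = prod_encode (idx x, n0 x)" for x
    define h where "h x = (1/2::real) ^ N x" for x
    have hpos: "0 < h x" for x unfolding h_def by simp
    have hr: "h x < r x" for x
    proof -
      have "h x \<le> (1/2::real) ^ n0 x" unfolding h_def N_def
        by (rule power_decreasing) (auto simp: le_prod_encode_2)
      thus ?thesis using n0[of x] by linarith
    qed
    have hinj: "h x \<noteq> h y" if "x \<noteq> y" for x y
    proof
      assume eq: "h x = h y"
      have "N x \<noteq> N y" unfolding N_def using that inj by (auto simp: inj_eq prod_encode_eq)
      hence "N x < N y \<or> N y < N x" by linarith
      thus False using eq unfolding h_def
        by (auto dest: power_strict_decreasing[of _ _ "1/2::real"])
    qed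
    define T where "T = (\<lambda>z. (u (fst z) - u (snd z)) / (h (fst z) - h (snd z))) ` (UNIV \<times> UNIV)"
    have "countable T" unfolding T_def using cnt by (intro countable_image countable_SIGMA) auto
    moreover have "uncountable {0<..<(1::real)}" by (simp add: uncountable_open_interval)
    ultimately have "\<not> {0<..<(1::real)} \<subseteq> T" using countable_subset by blast
    then obtain t where t: "0 < t" "t < 1" "t \<notin> T" by (auto simp: subset_eq)
    define v where "v x = u x - t * h x" for x
    have diff: "(\<lambda>x. u x - v x) = (\<lambda>x. t * h x)" unfolding v_def by simp
    have small: "\<bar>t * h x\<bar> < f x" for x
    proof -
      have "t * h x < h x" using t hpos[of x] by simp
      moreover have "h x < f x" using hr[of x] unfolding r_def by simp
      moreover have "\<bar>t * h x\<bar> = t * h x" using t hpos[of x] by simp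
      ultimately show ?thesis by linarith
    qed
    have Eg: "energy p b c (\<lambda>x. t * h x) \<le> ennreal (\<epsilon>/2)" using small by (intro fE) auto
    show "\<exists>u\<epsilon> \<in> Dp p b c. (\<forall>x y. x \<noteq> y \<longrightarrow> u\<epsilon> x \<noteq> u\<epsilon> y) \<and>
            (SUP x. ereal \<bar>u x - u\<epsilon> x\<bar>) < ereal \<epsilon> \<and>
            energy p b c (\<lambda>x. u x - u\<epsilon> x) < ennreal \<epsilon>"
    proof (intro bexI conjI allI impI)
      show "energy p b c (\<lambda>x. u x - v x) < ennreal \<epsilon>" unfolding diff using Eg lt by simp
      have "(SUP x. ereal \<bar>u x - v x\<bar>) \<le> ereal (\<epsilon>/2)"
      proof (rule SUP_least)
        fix x
        have "\<bar>u x - v x\<bar> = \<bar>t * h x\<bar>" unfolding v_def by simp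
        also have "\<dots> \<le> \<epsilon>/2" using small[of x] hr[of x] t hpos[of x] unfolding r_def
          by (simp add: abs_mult) (smt (verit) mult_le_cancel_right1)
        finally show "ereal \<bar>u x - v x\<bar> \<le> ereal (\<epsilon>/2)" by simp
      qed
      also have "\<dots> < ereal \<epsilon>" using e by simp
      finally show "(SUP x. ereal \<bar>u x - v x\<bar>) < ereal \<epsilon>" .
      fix x y :: 'a assume xy: "x \<noteq> y"
      show "v x \<noteq> v y"
      proof
        assume "v x = v y"
        hence "u x - u y = t * (h x - h y)" unfolding v_def by (simp add: algebra_simps)
        hence "t = (u x - u y) / (h x - h y)" using hinj[OF xy] by simp
        hence "t \<in> T" unfolding T_def by (auto intro!: image_eqI[where x = "(x, y)"])
        thus False using t by simp
      qed
    next
      have "energy p b c u < \<infinity>" using u unfolding Dp_def by simp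
      moreover have "energy p b c (\<lambda>x. t * h x) < \<infinity>" using Eg
        by (metis ennreal_less_top infinity_ennreal_def order.strict_trans1)
      ultimately have "energy p b c (\<lambda>x. u x - t * h x) < \<infinity>"
        using p bnn cnn by (intro energy_diff_finite) auto
      thus "v \<in> Dp p b c" unfolding Dp_def v_def by simp
    qed
  }
qed

end
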